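(* For $n\ge 3$, the commutator subgroup $[P_n,P_n]$ of the pure braid group $P_n$ is densely ordered by the restriction of the Dehornoy ordering of $B_n$.
   Context: $B_n$ is the Artin braid group with generators $\sigma_1,\dots,\sigma_{n-1}$; $P_n$ is the kernel of the natural map $B_n\to S_n$ to the symmetric group. A word in the generators is $i$-positive if it contains only $\sigma_1,\dots,\sigma_i$ and their inverses, $\sigma_i$ occurs, and every occurrence of $\sigma_i$ has positive exponent; a braid is $i$-positive if some representative word is. The Dehornoy ordering is the left-invariant total order on $B_n$ whose positive cone consists of all braids that are $i$-positive for some $i$. A subgroup is densely ordered if it has no least positive element (equivalently, between any two of its elements lies a third). *)

theory Defs
  imports Main
begin

text \<open>Braid words: a letter (i, True) stands for sigma_i, (i, False) for sigma_i inverse.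
  The braid group B_n is the set of words over indices 1..n-1 modulo braid_eq n.\<close>

type_synonym bword = "(nat \<times> bool) list"

definition valid_word :: "nat \<Rightarrow> bword \<Rightarrow> bool" where
  "valid_word n w \<longleftrightarrow> (\<forall>(i, b) \<in> set w. 1 \<le> i \<and> i < n)"

definition inv_word :: "bword \<Rightarrow> bword" where
  "inv_word w = rev (map (\<lambda>(i, b). (i, \<not> b)) w)"

inductive braid_eq :: "nat \<Rightarrow> bword \<Rightarrow> bword \<Rightarrow> bool" for n :: nat where
  refl: "braid_eq n w w"
| sym: "braid_eq n u w \<Longrightarrow> braid_eq n w u"
| trans: "braid_eq n u v \<Longrightarrow> braid_eq n v w \<Longrightarrow> braid_eq n u w"
| ctx: "braid_eq n x y \<Longrightarrow> valid_word n u \<Longrightarrow> valid_word n v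
          \<Longrightarrow> braid_eq n (u @ x @ v) (u @ y @ v)"
| cancel: "1 \<le> i \<Longrightarrow> i < n \<Longrightarrow> braid_eq n [(i, b), (i, \<not> b)] []"
| far_comm: "1 \<le> i \<Longrightarrow> i + 2 \<le> j \<Longrightarrow> j < n
          \<Longrightarrow> braid_eq n [(i, True), (j, True)] [(j, True), (i, True)]"
| braid_rel: "1 \<le> i \<Longrightarrow> i + 1 < n
          \<Longrightarrow> braid_eq n [(i, True), (i + 1, True), (i, True)]
                         [(i + 1, True), (i, True), (i + 1, True)]"

definition adj_transp :: "nat \<Rightarrow> nat \<Rightarrow> nat" where
  "adj_transp i = (\<lambda>k. if k = i then Suc i else if k = Suc i then i else k)"

fun perm_of_word :: "bword \<Rightarrow> nat \<Rightarrow> nat" where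
  "perm_of_word [] = id"
| "perm_of_word ((i, b) # w) = adj_transp i \<circ> perm_of_word w"

definition pure_word :: "nat \<Rightarrow> bword \<Rightarrow> bool" where
  "pure_word n w \<longleftrightarrow> valid_word n w \<and> perm_of_word w = id"

definition commutator_word :: "bword \<Rightarrow> bword \<Rightarrow> bword" where
  "commutator_word a b = inv_word a @ inv_word b @ a @ b"

text \<open>The commutator subgroup [P_n,P_n]: products of commutators of pure braids
  (closed under inverses since [a,b]^{-1} = [b,a]), as a set of words closed under braid_eq.\<close>
inductive comm_sub :: "nat \<Rightarrow> bword \<Rightarrow> bool" for n :: nat where
  nil: "comm_sub n []"
| snoc: "comm_sub n w \<Longrightarrow> pure_word n a \<Longrightarrow> pure_word n b
          \<Longrightarrow> comm_sub n (w @ commutator_word a b)"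
| eq: "comm_sub n w \<Longrightarrow> braid_eq n w w' \<Longrightarrow> valid_word n w' \<Longrightarrow> comm_sub n w'"

definition i_positive :: "nat \<Rightarrow> bword \<Rightarrow> bool" where
  "i_positive i w \<longleftrightarrow> (\<forall>(j, b) \<in> set w. 1 \<le> j \<and> j \<le> i)
                        \<and> (i, True) \<in> set w \<and> (i, False) \<notin> set w"

definition dehornoy_pos :: "nat \<Rightarrow> bword \<Rightarrow> bool" where
  "dehornoy_pos n w \<longleftrightarrow> (\<exists>i w'. 1 \<le> i \<and> i < n \<and> i_positive i w' \<and> braid_eq n w w')"

definition dehornoy_less :: "nat \<Rightarrow> bword \<Rightarrow> bword \<Rightarrow> bool" where
  "dehornoy_less n u w \<longleftrightarrow> dehornoy_pos n (inv_word u @ w)"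

definition densely_ordered :: "nat \<Rightarrow> (bword \<Rightarrow> bool) \<Rightarrow> bool" where
  "densely_ordered n H \<longleftrightarrow>
     (\<forall>h. H h \<and> dehornoy_pos n h \<longrightarrow>
        (\<exists>h'. H h' \<and> dehornoy_pos n h' \<and> dehornoy_less n h' h))"

end

theory Submission
  imports Defs
begin

lemma valid_Nil[simp]: "valid_word n []" by (simp add: valid_word_def)
lemma valid_Cons[simp]: "valid_word n ((i,b) # w) \<longleftrightarrow> 1 \<le> i \<and> i < n \<and> valid_word n w"
  by (auto simp: valid_word_def)
lemma valid_append[simp]: "valid_word n (u @ v) \<longleftrightarrow> valid_word n u \<and> valid_word n v"
  by (auto simp: valid_word_def)

lemma inv_word_Nil[simp]: "inv_word [] = []" by (simp add: inv_word_def)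
lemma inv_word_Cons[simp]: "inv_word ((i,b) # w) = inv_word w @ [(i, \<not> b)]"
  by (simp add: inv_word_def)
lemma inv_word_append[simp]: "inv_word (u @ v) = inv_word v @ inv_word u"
  by (simp add: inv_word_def)
lemma inv_word_inv[simp]: "inv_word (inv_word w) = w"
  by (induction w) (auto simp: inv_word_def)
lemma valid_inv[simp]: "valid_word n (inv_word w) \<longleftrightarrow> valid_word n w"
  by (auto simp: valid_word_def inv_word_def)
lemma set_inv: "set (inv_word w) = (\<lambda>(i,b). (i, \<not> b)) ` set w"
  by (auto simp: inv_word_def)

lemma ctx': "braid_eq n x y \<Longrightarrow> valid_word n u \<Longrightarrow> valid_word n v
   \<Longrightarrow> l = u @ x @ v \<Longrightarrow> r = u @ y @ v \<Longrightarrow> braid_eq n l r"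
  using braid_eq.ctx by blast

lemma rw: "braid_eq n l r \<Longrightarrow> valid_word n u \<Longrightarrow> valid_word n v \<Longrightarrow> x = u @ l @ v
   \<Longrightarrow> braid_eq n (u @ r @ v) w \<Longrightarrow> braid_eq n x w"
  using braid_eq.ctx braid_eq.trans by blast

lemma cancel_inv: "valid_word n w \<Longrightarrow> braid_eq n (inv_word w @ w) []"
proof (induction w)
  case Nil then show ?case by (simp add: braid_eq.refl)
next
  case (Cons a w)
  obtain i b where a: "a = (i,b)" by force
  with Cons have v: "1 \<le> i" "i < n" "valid_word n w" by auto
  have "braid_eq n (inv_word w @ [(i, \<not> b), (i, \<not>\<not> b)] @ w) (inv_word w @ [] @ w)"
    by (rule braid_eq.ctx[OF cancel]) (use v in auto)
  then show ?case using Cons.IH v a by (auto intro: braid_eq.trans)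
qed

lemma cancel_inv2: "valid_word n w \<Longrightarrow> braid_eq n (w @ inv_word w) []"
  using cancel_inv[of n "inv_word w"] by simp

definition es :: "bword \<Rightarrow> int" where
  "es w = sum_list (map (\<lambda>(i,b). if b then 1 else -1) w)"

lemma es_Nil[simp]: "es [] = 0" by (simp add: es_def)
lemma es_Cons[simp]: "es ((i,b) # w) = (if b then 1 else -1) + es w" by (simp add: es_def)
lemma es_append[simp]: "es (u @ v) = es u + es v" by (simp add: es_def)
lemma es_inv[simp]: "es (inv_word w) = - es w"
  by (induction w) auto

lemma es_braid: "braid_eq n u w \<Longrightarrow> es u = es w"
  by (induction rule: braid_eq.induct) auto

lemma comm_sub_props: "comm_sub n w \<Longrightarrow> valid_word n w \<and> es w = 0"
  by (induction rule: comm_sub.induct)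
     (auto simp: commutator_word_def pure_word_def dest: es_braid)

lemma perm_append[simp]: "perm_of_word (u @ v) = perm_of_word u \<circ> perm_of_word v"
  by (induction u rule: perm_of_word.induct) auto

lemma adj_invol: "adj_transp i \<circ> adj_transp i = id"
  by (auto simp: adj_transp_def fun_eq_iff)

lemma perm_w_inv: "perm_of_word (w @ inv_word w) = id"
proof (induction w)
  case Nil then show ?case by simp
next
  case (Cons a w)
  obtain i b where a: "a = (i,b)" by force
  have "perm_of_word (a # w @ inv_word (a # w))
        = adj_transp i \<circ> perm_of_word (w @ inv_word w) \<circ> adj_transp i"
    by (simp add: a comp_assoc)
  also have "\<dots> = id" by (simp only: Cons.IH adj_invol comp_id)
  finally show ?case by simp
qed

lemma pure_conj: "valid_word n g \<Longrightarrow> valid_word n b \<Longrightarrow> perm_of_word b = id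
   \<Longrightarrow> pure_word n (g @ b @ inv_word g)"
  using perm_w_inv[of g] by (simp add: pure_word_def comp_assoc)


lemma br12: "Suc 0 < n \<Longrightarrow> 2 < n \<Longrightarrow> braid_eq n [(1,True),(2,True),(1,True)] [(2,True),(1,True),(2,True)]"
  using braid_rel[of 1 n] by (simp add: numeral_2_eq_2)

lemma P1: assumes n1: "Suc 0 < n" and n2: "2 < n"
  shows "braid_eq n [(1,False),(1,False),(2,False),(2,False),(1,True),(1,True),(2,True),(2,True)]
                    [(1,False),(2,True),(1,False),(2,True),(1,False),(2,True)]"
  apply (rule rw[OF braid_eq.sym[OF cancel[of 1 n True]], where u="[(1,False),(1,False),(2,False),(2,False),(1,True),(1,True),(2,True)]" and v="[(2,True)]"])
  apply (simp_all add: n1 n2)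
  apply (rule rw[OF br12[OF n1 n2], where u="[(1,False),(1,False),(2,False),(2,False),(1,True)]" and v="[(1,False),(2,True)]"])
  apply (simp_all add: n1 n2)
  apply (rule rw[OF br12[OF n1 n2], where u="[(1,False),(1,False),(2,False),(2,False)]" and v="[(2,True),(1,False),(2,True)]"])
  apply (simp_all add: n1 n2)
  apply (rule rw[OF cancel[of 2 n False], where u="[(1,False),(1,False),(2,False)]" and v="[(1,True),(2,True),(2,True),(1,False),(2,True)]"])
  apply (simp_all add: n1 n2)
  apply (rule rw[OF braid_eq.sym[OF cancel[of 1 n True]], where u="[(1,False),(1,False),(2,False),(1,True),(2,True)]" and v="[(2,True),(1,False),(2,True)]"])
  apply (simp_all add: n1 n2)
  apply (rule rw[OF br12[OF n1 n2], where u="[(1,False),(1,False),(2,False)]" and v="[(1,False),(2,True),(1,False),(2,True)]"])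
  apply (simp_all add: n1 n2)
  apply (rule rw[OF cancel[of 2 n False], where u="[(1,False),(1,False)]" and v="[(1,True),(2,True),(1,False),(2,True),(1,False),(2,True)]"])
  apply (simp_all add: n1 n2)
  apply (rule rw[OF cancel[of 1 n False], where u="[(1,False)]" and v="[(2,True),(1,False),(2,True),(1,False),(2,True)]"])
  apply (simp_all add: n1 n2)
  by (rule braid_eq.refl)

lemma P2: assumes n1: "Suc 0 < n" and n2: "2 < n"
  shows "braid_eq n [(2,True),(1,True),(2,False),(2,False),(1,False),(1,False),(2,True),(2,True),(1,True),(1,True)]
                    [(1,False),(1,False),(2,True),(1,False),(2,True),(2,True),(1,True),(1,True)]"
  apply (rule rw[OF braid_eq.sym[OF cancel[of 1 n False]], where u="[]" and v="[(2,True),(1,True),(2,False),(2,False),(1,False),(1,False),(2,True),(2,True),(1,True),(1,True)]"])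
  apply (simp_all add: n1 n2)
  apply (rule rw[OF br12[OF n1 n2], where u="[(1,False)]" and v="[(2,False),(2,False),(1,False),(1,False),(2,True),(2,True),(1,True),(1,True)]"])
  apply (simp_all add: n1 n2)
  apply (rule rw[OF cancel[of 2 n True], where u="[(1,False),(2,True),(1,True)]" and v="[(2,False),(1,False),(1,False),(2,True),(2,True),(1,True),(1,True)]"])
  apply (simp_all add: n1 n2)
  apply (rule rw[OF braid_eq.sym[OF cancel[of 1 n False]], where u="[(1,False)]" and v="[(2,True),(1,True),(2,False),(1,False),(1,False),(2,True),(2,True),(1,True),(1,True)]"])
  apply (simp_all add: n1 n2)
  apply (rule rw[OF br12[OF n1 n2], where u="[(1,False),(1,False)]" and v="[(2,False),(1,False),(1,False),(2,True),(2,True),(1,True),(1,True)]"])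
  apply (simp_all add: n1 n2)
  apply (rule rw[OF cancel[of 2 n True], where u="[(1,False),(1,False),(2,True),(1,True)]" and v="[(1,False),(1,False),(2,True),(2,True),(1,True),(1,True)]"])
  apply (simp_all add: n1 n2)
  apply (rule rw[OF cancel[of 1 n True], where u="[(1,False),(1,False),(2,True)]" and v="[(1,False),(2,True),(2,True),(1,True),(1,True)]"])
  apply (simp_all add: n1 n2)
  by (rule braid_eq.refl)

lemma comm_conj:
  assumes "valid_word n g" "valid_word n a" "valid_word n b"
  shows "braid_eq n (commutator_word (g @ b @ inv_word g) (g @ a @ inv_word g))
                    (g @ inv_word b @ inv_word a @ b @ a @ inv_word g)"
  unfolding commutator_word_def
  apply (rule rw[OF cancel_inv[of n g], where u="g @ inv_word b" and
          v="inv_word a @ inv_word g @ g @ b @ inv_word g @ g @ a @ inv_word g"])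
  apply (simp_all add: assms)
  apply (rule rw[OF cancel_inv[of n g], where u="g @ inv_word b @ inv_word a" and
          v="b @ inv_word g @ g @ a @ inv_word g"])
  apply (simp_all add: assms)
  apply (rule rw[OF cancel_inv[of n g], where u="g @ inv_word b @ inv_word a @ b" and
          v="a @ inv_word g"])
  apply (simp_all add: assms)
  by (rule braid_eq.refl)

lemma valid_g: "\<forall>x\<in>set g. fst x = 1 \<Longrightarrow> 2 \<le> n \<Longrightarrow> valid_word n g"
  by (auto simp: valid_word_def)

lemma key:
  assumes n3: "n \<ge> 3" and H: "comm_sub n h" and g1: "\<forall>x\<in>set g. fst x = 1"
  shows "comm_sub n (h @ commutator_word (g @ [(2,True),(2,True)] @ inv_word g) (g @ [(1,True),(1,True)] @ inv_word g))"
    and "dehornoy_less n (h @ commutator_word (g @ [(2,True),(2,True)] @ inv_word g) (g @ [(1,True),(1,True)] @ inv_word g)) h"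
proof -
  have vg: "valid_word n g" using valid_g[OF g1] n3 by simp
  have pp: "Suc 0 < n" "2 < n" using n3 by auto
  have vh: "valid_word n h" using comm_sub_props[OF H] by simp
  show "comm_sub n (h @ commutator_word (g @ [(2,True),(2,True)] @ inv_word g) (g @ [(1,True),(1,True)] @ inv_word g))"
    apply (rule comm_sub.snoc[OF H])
    using pure_conj[of n g "[(2,True),(2,True)]"] pure_conj[of n g "[(1,True),(1,True)]"] vg n3
    by (auto simp: adj_invol)
  let ?A = "g @ [(2,True),(2,True)] @ inv_word g"
  let ?B = "g @ [(1,True),(1,True)] @ inv_word g"
  let ?c = "commutator_word ?A ?B"
  have ic: "inv_word ?c = commutator_word ?B ?A" by (simp add: commutator_word_def)
  have vc: "valid_word n (inv_word ?c)" using vg n3 by (simp add: commutator_word_def)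
  have s1: "braid_eq n (inv_word (h @ ?c) @ h) (inv_word ?c)"
    apply (rule rw[OF cancel_inv[of n h], where u="inv_word ?c" and v="[]"])
    using vh vc by (simp_all add: braid_eq.refl)
  have s2: "braid_eq n (inv_word ?c) (g @ inv_word [(1,True),(1,True)] @ inv_word [(2,True),(2,True)]
       @ [(1,True),(1,True)] @ [(2,True),(2,True)] @ inv_word g)"
    unfolding ic by (rule comm_conj) (use vg n3 in auto)
  have s3: "braid_eq n (g @ inv_word [(1,True),(1,True)] @ inv_word [(2,True),(2,True)]
       @ [(1,True),(1,True)] @ [(2,True),(2,True)] @ inv_word g)
      (g @ [(1,False),(2,True),(1,False),(2,True),(1,False),(2,True)] @ inv_word g)"
    by (rule ctx'[OF P1[OF pp]]) (use vg n3 in auto)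
  have ip: "i_positive 2 (g @ [(1,False),(2,True),(1,False),(2,True),(1,False),(2,True)] @ inv_word g)"
    using g1 by (auto simp: i_positive_def set_inv)
  show "dehornoy_less n (h @ ?c) h"
    unfolding dehornoy_less_def dehornoy_pos_def
    using n3 ip braid_eq.trans[OF s1 braid_eq.trans[OF s2 s3]]
    by (intro exI[of _ 2]) auto
qed

theorem proposition3p3:
  fixes n :: nat
  assumes "n \<ge> 3"
  shows "densely_ordered n (comm_sub n)"
  unfolding densely_ordered_def
proof (intro allI impI)
  fix h assume "comm_sub n h \<and> dehornoy_pos n h"
  then have H: "comm_sub n h" and P: "dehornoy_pos n h" by auto
  have pp: "Suc 0 < n" "2 < n" using assms by auto
  have vh: "valid_word n h" and eh: "es h = 0" using comm_sub_props[OF H] by auto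
  obtain i w where i1: "1 \<le> i" and iN: "i < n" and ip: "i_positive i w" and hw: "braid_eq n h w"
    using P unfolding dehornoy_pos_def by blast
  have vw: "valid_word n w" using ip iN unfolding i_positive_def valid_word_def by auto
  consider "i = 1" | "i = 2" | "i \<ge> 3" using i1 by linarith
  then show "\<exists>h'. comm_sub n h' \<and> dehornoy_pos n h' \<and> dehornoy_less n h' h"
  proof cases
    case 1
    have "\<forall>x\<in>set w. x = (1,True)"
    proof
      fix x assume x: "x \<in> set w"
      obtain j b where xj: "x = (j,b)" by force
      have "j = 1" "(1,False) \<notin> set w" using ip x xj unfolding 1 i_positive_def by auto
      then show "x = (1,True)" using x xj by (cases b) auto
    qed
    moreover have "w \<noteq> []" using ip unfolding i_positive_def by auto
    ultimately have "es w > 0"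
    proof (induction w)
      case Nil then show ?case by simp
    next
      case (Cons a w) then show ?case by (cases "w = []") auto
    qed
    with es_braid[OF hw] eh show ?thesis by simp
  next
    case 3
    let ?g = "[] :: bword"
    let ?c = "commutator_word (?g @ [(2,True),(2,True)] @ inv_word ?g) (?g @ [(1,True),(1,True)] @ inv_word ?g)"
    have k1: "comm_sub n (h @ ?c)" and k2: "dehornoy_less n (h @ ?c) h"
      using key[OF assms H, of ?g] by auto
    have vc: "valid_word n ?c" using assms by (simp add: commutator_word_def)
    have e: "braid_eq n (h @ ?c) (w @ ?c)"
      by (rule ctx'[OF hw, where u="[]" and v="?c"]) (use vc in auto)
    have "i_positive i (w @ ?c)" using ip 3 unfolding i_positive_def
      by (auto simp: commutator_word_def)
    then have "dehornoy_pos n (h @ ?c)" unfolding dehornoy_pos_def using e i1 iN by blast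
    with k1 k2 show ?thesis by blast
  next
    case 2
    have "(2,True) \<in> set w" using ip 2 unfolding i_positive_def by auto
    then obtain p s where ws: "w = p @ (2,True) # s" and ns: "(2,True) \<notin> set s"
      using split_list_last by metis
    have s1: "\<forall>x\<in>set s. fst x = 1"
    proof
      fix x assume x: "x \<in> set s"
      obtain j b where xj: "x = (j,b)" by force
      have xw: "x \<in> set w" using x ws by simp
      have "1 \<le> j" "j \<le> 2" "(2,False) \<notin> set w" using ip xw xj 2 unfolding i_positive_def by auto
      moreover have "x \<noteq> (2,True)" using ns x by auto
      ultimately show "fst x = 1" using xw xj by (cases b; cases "j = 2") auto
    qed
    define g where "g = inv_word s @ [(1,True)]"
    have g1: "\<forall>x\<in>set g. fst x = 1" using s1 by (auto simp: g_def set_inv)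
    let ?c = "commutator_word (g @ [(2,True),(2,True)] @ inv_word g) (g @ [(1,True),(1,True)] @ inv_word g)"
    have k1: "comm_sub n (h @ ?c)" and k2: "dehornoy_less n (h @ ?c) h"
      using key[OF assms H g1] by auto
    have vg: "valid_word n g" using valid_g[OF g1] assms by simp
    have vs: "valid_word n s" using valid_g[OF s1] assms by simp
    have vp: "valid_word n p" using vw ws by simp
    have vc: "valid_word n ?c" using vg assms by (simp add: commutator_word_def)
    have e1: "braid_eq n (h @ ?c) (w @ ?c)"
      by (rule ctx'[OF hw, where u="[]" and v="?c"]) (use vc in auto)
    have e2: "braid_eq n (w @ ?c) (w @ (g @ [(2,False),(2,False),(1,False),(1,False),(2,True),(2,True),(1,True),(1,True)] @ inv_word g))"
      by (rule ctx'[OF comm_conj[of n g "[(1,True),(1,True)]" "[(2,True),(2,True)]"], where u="w" and v="[]"])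
         (use vg vw assms in auto)
    have e3: "braid_eq n (w @ (g @ [(2,False),(2,False),(1,False),(1,False),(2,True),(2,True),(1,True),(1,True)] @ inv_word g))
         (p @ [(2,True),(1,True),(2,False),(2,False),(1,False),(1,False),(2,True),(2,True),(1,True),(1,True)] @ inv_word g)"
      by (rule ctx'[OF cancel_inv2[OF vs], where u="p @ [(2,True)]" and
            v="[(1,True),(2,False),(2,False),(1,False),(1,False),(2,True),(2,True),(1,True),(1,True)] @ inv_word g"])
         (use vp vg assms in \<open>auto simp: ws g_def\<close>)
    have e4: "braid_eq n (p @ [(2,True),(1,True),(2,False),(2,False),(1,False),(1,False),(2,True),(2,True),(1,True),(1,True)] @ inv_word g)
         (p @ [(1,False),(1,False),(2,True),(1,False),(2,True),(2,True),(1,True),(1,True)] @ inv_word g)"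
      by (rule ctx'[OF P2[OF pp]]) (use vp vg in auto)
    have "i_positive 2 (p @ [(1,False),(1,False),(2,True),(1,False),(2,True),(2,True),(1,True),(1,True)] @ inv_word g)"
      using ip g1 2 unfolding i_positive_def ws by (auto simp: set_inv)
    then have "dehornoy_pos n (h @ ?c)" unfolding dehornoy_pos_def
      using braid_eq.trans[OF e1 braid_eq.trans[OF e2 braid_eq.trans[OF e3 e4]]] assms by (intro exI[of _ 2]) auto
    with k1 k2 show ?thesis by blast
  qed
qed

end
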